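(* Let $R\in(0,\pi/2)$ and consider on $(0,\pi)$ the system $\boldsymbol f'=A\boldsymbol f$ with \[A=\frac{1}{\sin s}\begin{pmatrix}-3\cos s&3\cos s\\ \cos R-\cos s&\cos s-\cos R\end{pmatrix}.\] Then a fundamental matrix of solutions (whose columns are solutions) is \[\boldsymbol\phi(s)=\begin{pmatrix}1&(1-\cos R\cos s+\cos^2s)\csc^2s\,(\cot\frac s2)^{\cos R}\\ 1&(\cos^2s-\cos R\cos s-\frac13\sin^2R)\csc^2s\,(\cot\frac s2)^{\cos R}\end{pmatrix}.\] Moreover, if $\boldsymbol f=(f_1,f_2)$ is the solution with $\boldsymbol f(R)\sin^4R=\cos R\,(3,2)$ and $h(s):=f_2(s)\sin^3s$, then \[h(s)=\underline c\Big\{(1+2\csc^2R)\sin^3s+\big(\cos^2s-\cos R\cos s-\tfrac13\sin^2R\big)\sin s\Big(\frac{\cot(s/2)}{\cot(R/2)}\Big)^{\cos R}\Big\},\qquad \underline c:=\frac{3\cos R\csc^2R}{3+\sin^2R}.\] *)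

theory Defs
  imports "HOL-Analysis.Analysis"
begin

definition csc :: "real \<Rightarrow> real" where
  "csc x = 1 / sin x"

definition A :: "real \<Rightarrow> real \<Rightarrow> real ^ 2 ^ 2" where
  "A R s = (\<chi> i j. (1 / sin s) *
      (if i = 1 then (if j = 1 then - 3 * cos s else 3 * cos s)
       else (if j = 1 then cos R - cos s else cos s - cos R)))"

definition is_solution :: "real \<Rightarrow> (real \<Rightarrow> real ^ 2) \<Rightarrow> bool" where
  "is_solution R f \<longleftrightarrow>
     (\<forall>s\<in>{0<..<pi}. (f has_vector_derivative (A R s *v f s)) (at s))"

definition phi :: "real \<Rightarrow> real \<Rightarrow> real ^ 2 ^ 2" where
  "phi R s = (\<chi> i j.
      if j = 1 then 1
      else if i = 1 then (1 - cos R * cos s + (cos s)\<^sup>2) * (csc s)\<^sup>2 * (cot (s / 2)) powr (cos R)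
      else ((cos s)\<^sup>2 - cos R * cos s - (sin R)\<^sup>2 / 3) * (csc s)\<^sup>2 * (cot (s / 2)) powr (cos R))"

definition fundamental_matrix :: "real \<Rightarrow> (real \<Rightarrow> real ^ 2 ^ 2) \<Rightarrow> bool" where
  "fundamental_matrix R \<Phi> \<longleftrightarrow>
     (\<forall>j. is_solution R (\<lambda>s. column j (\<Phi> s))) \<and>
     (\<forall>s\<in>{0<..<pi}. det (\<Phi> s) \<noteq> 0)"

end

theory Submission imports Defs begin

lemma cot_half_pos: "s \<in> {0<..<pi} \<Longrightarrow> 0 < cot (s/2)"
  by (rule cot_gt_zero) auto

lemma sin_half_ne: "s \<in> {0<..<pi} \<Longrightarrow> sin (s/2) \<noteq> 0"
  using sin_gt_zero[of "s/2"] by auto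

lemma T_deriv:
  assumes s: "s \<in> {0<..<pi}"
  shows "((\<lambda>t. cot (t/2) powr k) has_real_derivative (- k / sin s * cot (s/2) powr k)) (at s)"
proof -
  have p: "0 < cot (s/2)" using cot_half_pos[OF s] .
  have sh: "sin (s/2) \<noteq> 0" using sin_half_ne[OF s] .
  have c: "((\<lambda>t. cot (t/2)) has_real_derivative (-inverse ((sin (s/2))\<^sup>2) * (1/2))) (at s)"
    using DERIV_chain2[OF DERIV_cot[OF sh] DERIV_cdivide[OF DERIV_ident, of 2 s]] by simp
  have d: "((\<lambda>t. cot (t/2) powr k) has_real_derivative k * cot (s/2) powr (k - 1) * (-inverse ((sin (s/2))\<^sup>2) * (1/2))) (at s)"
    using DERIV_fun_powr[OF c p] by simp
  have ss: "sin s = 2 * sin (s/2) * cos (s/2)"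
    using sin_double[of "s/2"] by simp
  have ch: "cos (s/2) \<noteq> 0" using p by (auto simp: cot_def)
  have "k * cot (s/2) powr (k - 1) * (-inverse ((sin (s/2))\<^sup>2) * (1/2)) = - k / sin s * cot (s/2) powr k"
  proof -
    have e: "cot (s/2) powr (k-1) = cot (s/2) powr k / cot (s/2)" using p by (simp add: powr_diff)
    have g: "\<And>Q. k * (Q / cot (s/2)) * (-inverse ((sin (s/2))\<^sup>2) * (1/2)) = - k / sin s * Q"
      using sh ch by (simp add: ss cot_def field_simps power2_eq_square)
    show ?thesis unfolding e g ..
  qed
  with d show ?thesis by simp
qed

lemma Av1: "(A R s *v x) $ 1 = (1/sin s) * (-3*cos s) * x$1 + (1/sin s)*(3*cos s)*x$2"
  by (simp add: A_def matrix_vector_mult_def sum_2)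
lemma Av2: "(A R s *v x) $ 2 = (1/sin s) * (cos R - cos s) * x$1 + (1/sin s)*(cos s - cos R)*x$2"
  by (simp add: A_def matrix_vector_mult_def sum_2)

lemma vec_deriv_iff:
  fixes F :: "real \<Rightarrow> real^2"
  shows "(F has_vector_derivative D) (at s) \<longleftrightarrow>
     ((\<lambda>t. F t$1) has_real_derivative D$1) (at s) \<and> ((\<lambda>t. F t$2) has_real_derivative D$2) (at s)"
proof
  assume "(F has_vector_derivative D) (at s)"
  then show "((\<lambda>t. F t$1) has_real_derivative D$1) (at s) \<and> ((\<lambda>t. F t$2) has_real_derivative D$2) (at s)"
    unfolding has_real_derivative_iff_has_vector_derivative
    using bounded_linear.has_vector_derivative[OF bounded_linear_vec_nth] by blast
next
  assume a: "((\<lambda>t. F t$1) has_real_derivative D$1) (at s) \<and> ((\<lambda>t. F t$2) has_real_derivative D$2) (at s)"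
  have eF: "(\<lambda>t. F t$1 *\<^sub>R axis (1::2) (1::real) + F t$2 *\<^sub>R axis (2::2) (1::real)) = F"
    by (auto simp: vec_eq_iff forall_2 axis_def)
  have eD: "D$1 *\<^sub>R axis (1::2) (1::real) + D$2 *\<^sub>R axis (2::2) (1::real) = D"
    by (auto simp: vec_eq_iff forall_2 axis_def)
  have "((\<lambda>t. F t$1 *\<^sub>R axis (1::2) (1::real) + F t$2 *\<^sub>R axis (2::2) (1::real)) has_vector_derivative
      D$1 *\<^sub>R axis (1::2) (1::real) + D$2 *\<^sub>R axis (2::2) (1::real)) (at s)"
    using a unfolding has_real_derivative_iff_has_vector_derivative
    by (intro has_vector_derivative_add bounded_linear.has_vector_derivative[OF bounded_linear_scaleR_left]) auto
  then show "(F has_vector_derivative D) (at s)" by (simp only: eF eD)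
qed

lemma sol_iff: "is_solution R f \<longleftrightarrow> (\<forall>s\<in>{0<..<pi}.
   ((\<lambda>t. f t$1) has_real_derivative (1/sin s) * (-3*cos s) * f s$1 + (1/sin s)*(3*cos s)*f s$2) (at s) \<and>
   ((\<lambda>t. f t$2) has_real_derivative (1/sin s) * (cos R - cos s) * f s$1 + (1/sin s)*(cos s - cos R)*f s$2) (at s))"
  unfolding is_solution_def vec_deriv_iff Av1 Av2 ..

lemma alg1:
  fixes \<sigma> c k Q :: real
  assumes "\<sigma> \<noteq> 0" "\<sigma>^2 + c^2 = 1"
  shows "(k*\<sigma> - 2*c*\<sigma>) * (1/\<sigma>)^2 * Q + (-2*c/\<sigma>^3) * (1 - k*c + c^2) * Q
     + (- k / \<sigma> * Q) * ((1 - k*c + c^2) * (1/\<sigma>)^2)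
   = (1/\<sigma>) * (-3*c) * ((1 - k*c + c^2) * (1/\<sigma>)^2 * Q)
     + (1/\<sigma>) * (3*c) * ((c^2 - k*c - (1 - k^2)/3) * (1/\<sigma>)^2 * Q)"
proof -
  have h: "\<sigma>^2 = 1 - c^2" using assms by simp
  have b: "k*\<sigma>^2 - 2*c*\<sigma>^2 - 2*c*(1-k*c+c^2) - k*(1-k*c+c^2) = -3*c*((1-k*c+c^2) - (c^2 - k*c - (1-k^2)/3))"
    unfolding h by (simp add: algebra_simps power2_eq_square)
  have l: "(k*\<sigma> - 2*c*\<sigma>) * (1/\<sigma>)^2 * Q + (-2*c/\<sigma>^3) * (1 - k*c + c^2) * Q
     + (- k / \<sigma> * Q) * ((1 - k*c + c^2) * (1/\<sigma>)^2) = Q/\<sigma>^3 * (k*\<sigma>^2 - 2*c*\<sigma>^2 - 2*c*(1-k*c+c^2) - k*(1-k*c+c^2))"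
    using assms(1) by (simp add: field_simps power2_eq_square power3_eq_cube)
  have r: "(1/\<sigma>) * (-3*c) * ((1 - k*c + c^2) * (1/\<sigma>)^2 * Q)
     + (1/\<sigma>) * (3*c) * ((c^2 - k*c - (1 - k^2)/3) * (1/\<sigma>)^2 * Q) = Q/\<sigma>^3 * (-3*c*((1-k*c+c^2) - (c^2 - k*c - (1-k^2)/3)))"
    using assms(1) by (simp add: field_simps power2_eq_square power3_eq_cube)
  show ?thesis unfolding l r b ..
qed

lemma alg_G:
  fixes \<sigma> c k a P C :: real
  assumes "\<sigma> \<noteq> 0" "C = 1/\<sigma>"
  shows "((k * \<sigma> - 2 * c * \<sigma>) * C^2 + (-2*c/\<sigma>^3) * (a - k*c + c^2)) * P + (- k / \<sigma> * P) * ((a - k*c + c^2) * C^2)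
     = P / \<sigma>^3 * (k*\<sigma>^2 - 2*c*\<sigma>^2 - (2*c + k)*(a - k*c + c^2))"
  unfolding assms(2) using assms(1) by (simp add: field_simps power2_eq_square power3_eq_cube)

lemma G_deriv:
  assumes s: "s \<in> {0<..<pi}"
  shows "((\<lambda>t. (a - k*cos t + (cos t)^2) * (csc t)^2 * cot (t/2) powr k) has_real_derivative
     cot (s/2) powr k / (sin s)^3 * (k*(sin s)^2 - 2*cos s*(sin s)^2 - (2*cos s + k)*(a - k*cos s + (cos s)^2))) (at s)"
proof -
  have sp: "sin s \<noteq> 0" using s sin_gt_zero by force
  have u: "((\<lambda>t. a - k*cos t + (cos t)^2) has_real_derivative (k * sin s - 2 * cos s * sin s)) (at s)"
    by (rule DERIV_cong, (rule derivative_eq_intros refl)+) simp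
  have c0: "((\<lambda>t. (1 / sin t)^2) has_real_derivative (-2*cos s/(sin s)^3)) (at s)"
    apply (rule DERIV_cong)
     apply (rule derivative_eq_intros refl sp)+
    using sp by (simp add: field_simps power2_eq_square power3_eq_cube)
  have c: "((\<lambda>t. (csc t)^2) has_real_derivative (-2*cos s/(sin s)^3)) (at s)"
    using c0 unfolding csc_def .
  note d = DERIV_mult[OF DERIV_mult[OF u c] T_deriv[OF s, of k]]
  show ?thesis
    by (rule DERIV_cong[OF d], rule alg_G[OF sp]) (simp add: csc_def)
qed

lemma phi12: "phi R t $ 1 $ 2 = (1 - cos R * cos t + (cos t)^2) * (csc t)^2 * cot (t/2) powr cos R"
  by (simp add: phi_def)
lemma phi22: "phi R t $ 2 $ 2 = ((cos t)^2 - cos R * cos t - (sin R)^2/3) * (csc t)^2 * cot (t/2) powr cos R"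
  by (simp add: phi_def)
lemma phi11: "phi R t $ 1 $ 1 = 1" by (simp add: phi_def)
lemma phi21: "phi R t $ 2 $ 1 = 1" by (simp add: phi_def)

lemma G2_deriv:
  assumes s: "s \<in> {0<..<pi}"
  shows "((\<lambda>t. ((cos t)^2 - k * cos t - m/3) * (csc t)^2 * cot (t/2) powr k) has_real_derivative
     cot (s/2) powr k / (sin s)^3 * (k*(sin s)^2 - 2*cos s*(sin s)^2 - (2*cos s + k)*((cos s)^2 - k*cos s - m/3))) (at s)"
proof -
  have e: "(\<lambda>t. ((cos t)^2 - k * cos t - m/3) * (csc t)^2 * cot (t/2) powr k) =
     (\<lambda>t. (-m/3 - k*cos t + (cos t)^2) * (csc t)^2 * cot (t/2) powr k)"
    by (simp add: fun_eq_iff algebra_simps)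
  have e2: "(-m/3 - k*cos s + (cos s)^2) = ((cos s)^2 - k*cos s - m/3)" by simp
  show ?thesis using G_deriv[OF s, of "-m/3" k] unfolding e e2 .
qed

lemma alg_c1:
  fixes \<sigma> c k m P C :: real
  assumes "\<sigma> \<noteq> 0" "C = 1/\<sigma>" "\<sigma>^2 + c^2 = 1" "m + k^2 = 1"
  shows "P / \<sigma>^3 * (k*\<sigma>^2 - 2*c*\<sigma>^2 - (2*c + k)*(1 - k*c + c^2)) =
    1/\<sigma> * (-3*c) * ((1 - k*c + c^2) * C^2 * P) + 1/\<sigma> * (3*c) * ((c^2 - k*c - m/3) * C^2 * P)"
proof -
  have h: "\<sigma>^2 = 1 - c^2" "m = 1 - k^2" using assms by simp_all
  have b: "k*\<sigma>^2 - 2*c*\<sigma>^2 - (2*c + k)*(1 - k*c + c^2) = -3*c*((1 - k*c + c^2) - (c^2 - k*c - m/3))"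
    unfolding h by (simp add: algebra_simps power2_eq_square)
  show ?thesis unfolding b assms(2) using assms(1) by (simp add: field_simps power2_eq_square power3_eq_cube)
qed

lemma alg_c2:
  fixes \<sigma> c k m P C :: real
  assumes "\<sigma> \<noteq> 0" "C = 1/\<sigma>" "\<sigma>^2 + c^2 = 1" "m + k^2 = 1"
  shows "P / \<sigma>^3 * (k*\<sigma>^2 - 2*c*\<sigma>^2 - (2*c + k)*(c^2 - k*c - m/3)) =
    1/\<sigma> * (k - c) * ((1 - k*c + c^2) * C^2 * P) + 1/\<sigma> * (c - k) * ((c^2 - k*c - m/3) * C^2 * P)"
proof -
  have h: "\<sigma>^2 = 1 - c^2" "m = 1 - k^2" using assms by simp_all
  have b: "k*\<sigma>^2 - 2*c*\<sigma>^2 - (2*c + k)*(c^2 - k*c - m/3) = (k - c)*((1 - k*c + c^2) - (c^2 - k*c - m/3))"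
    unfolding h by (simp add: field_simps power2_eq_square)
  show ?thesis unfolding b assms(2) using assms(1) by (simp add: field_simps power2_eq_square power3_eq_cube)
qed

lemma col1_sol: "is_solution R (\<lambda>s. column 1 (phi R s))"
  unfolding sol_iff column_def vec_lambda_beta phi11 phi21
proof (intro ballI conjI)
  fix s :: real
  show "((\<lambda>t. 1) has_real_derivative 1 / sin s * (- 3 * cos s) * 1 + 1 / sin s * (3 * cos s) * 1) (at s)"
    by (rule DERIV_cong[OF DERIV_const]) (simp add: field_split_simps)
  show "((\<lambda>t. 1) has_real_derivative 1 / sin s * (cos R - cos s) * 1 + 1 / sin s * (cos s - cos R) * 1) (at s)"
    by (rule DERIV_cong[OF DERIV_const]) (simp add: field_split_simps)
qed

lemma col2_sol: "is_solution R (\<lambda>s. column 2 (phi R s))"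
  unfolding sol_iff column_def vec_lambda_beta phi12 phi22
proof
  fix s :: real assume s: "s \<in> {0<..<pi}"
  have sp: "sin s \<noteq> 0" using s sin_gt_zero by force
  have cc: "csc s = 1 / sin s" by (simp add: csc_def)
  have p1: "(sin s)^2 + (cos s)^2 = 1" by simp
  have p2: "(sin R)^2 + (cos R)^2 = 1" by simp
  show "((\<lambda>t. (1 - cos R * cos t + (cos t)^2) * (csc t)^2 * cot (t/2) powr cos R) has_real_derivative
     1 / sin s * (- 3 * cos s) * ((1 - cos R * cos s + (cos s)^2) * (csc s)^2 * cot (s/2) powr cos R) +
     1 / sin s * (3 * cos s) * (((cos s)^2 - cos R * cos s - (sin R)^2/3) * (csc s)^2 * cot (s/2) powr cos R)) (at s) \<and>
    ((\<lambda>t. ((cos t)^2 - cos R * cos t - (sin R)^2/3) * (csc t)^2 * cot (t/2) powr cos R) has_real_derivative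
     1 / sin s * (cos R - cos s) * ((1 - cos R * cos s + (cos s)^2) * (csc s)^2 * cot (s/2) powr cos R) +
     1 / sin s * (cos s - cos R) * (((cos s)^2 - cos R * cos s - (sin R)^2/3) * (csc s)^2 * cot (s/2) powr cos R)) (at s)"
  proof
    show "((\<lambda>t. (1 - cos R * cos t + (cos t)^2) * (csc t)^2 * cot (t/2) powr cos R) has_real_derivative
     1 / sin s * (- 3 * cos s) * ((1 - cos R * cos s + (cos s)^2) * (csc s)^2 * cot (s/2) powr cos R) +
     1 / sin s * (3 * cos s) * (((cos s)^2 - cos R * cos s - (sin R)^2/3) * (csc s)^2 * cot (s/2) powr cos R)) (at s)"
      by (rule DERIV_cong[OF G_deriv[OF s, of 1 "cos R"]], rule alg_c1[OF sp cc p1 p2])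
    show "((\<lambda>t. ((cos t)^2 - cos R * cos t - (sin R)^2/3) * (csc t)^2 * cot (t/2) powr cos R) has_real_derivative
     1 / sin s * (cos R - cos s) * ((1 - cos R * cos s + (cos s)^2) * (csc s)^2 * cot (s/2) powr cos R) +
     1 / sin s * (cos s - cos R) * (((cos s)^2 - cos R * cos s - (sin R)^2/3) * (csc s)^2 * cot (s/2) powr cos R)) (at s)"
      by (rule DERIV_cong[OF G2_deriv[OF s, of "cos R" "(sin R)^2"]], rule alg_c2[OF sp cc p1 p2])
  qed
qed

lemma P_pos: "s \<in> {0<..<pi} \<Longrightarrow> 0 < cot (s/2) powr k"
proof -
  assume s: "s \<in> {0<..<pi}"
  have "cot (s/2) \<noteq> 0" using cot_half_pos[OF s] by simp
  then show ?thesis by simp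
qed

lemma G_diff: "phi R t $ 1 $ 2 - phi R t $ 2 $ 2 = (1 + (sin R)^2/3) * (csc t)^2 * cot (t/2) powr cos R"
  unfolding phi12 phi22 by (simp add: algebra_simps)

lemma G_diff_ne: "t \<in> {0<..<pi} \<Longrightarrow> phi R t $ 1 $ 2 - phi R t $ 2 $ 2 \<noteq> 0"
proof -
  assume t: "t \<in> {0<..<pi}"
  have "sin t \<noteq> 0" using t sin_gt_zero by force
  hence "csc t \<noteq> 0" by (simp add: csc_def)
  moreover have "0 < cot (t/2) powr cos R" using P_pos[OF t] .
  moreover have "0 < 1 + (sin R)^2/3" by (simp add: add_pos_nonneg)
  ultimately show ?thesis unfolding G_diff by simp
qed

lemma fund: "fundamental_matrix R (phi R)"
  unfolding fundamental_matrix_def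
proof
  show "\<forall>j. is_solution R (\<lambda>s. column j (phi R s))"
    unfolding forall_2 using col1_sol col2_sol by blast
  show "\<forall>s\<in>{0<..<pi}. det (phi R s) \<noteq> 0"
  proof
    fix s :: real assume s: "s \<in> {0<..<pi}"
    have "det (phi R s) = - (phi R s $ 1 $ 2 - phi R s $ 2 $ 2)"
      unfolding det_2 phi11 phi21 by simp
    then show "det (phi R s) \<noteq> 0" using G_diff_ne[OF s, of R] by auto
  qed
qed

lemma ring1: "(a*(-3*c)*x1 + a*(3*c)*x2 - (a*(k-c)*x1 + a*(c-k)*x2)) * (y1-y2)
   - (x1-x2)*(a*(-3*c)*y1 + a*(3*c)*y2 - (a*(k-c)*y1 + a*(c-k)*y2)) = (0::real)"
  by algebra

lemma ring2: "x1 - x2 = b * (y1 - y2) \<Longrightarrow>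
   a*(k-c)*x1 + a*(c-k)*x2 - b * (a*(k-c)*y1 + a*(c-k)*y2) = (0::real)"
proof -
  assume h: "x1 - x2 = b * (y1 - y2)"
  have "a*(k-c)*x1 + a*(c-k)*x2 - b * (a*(k-c)*y1 + a*(c-k)*y2) = a*(k-c)*((x1 - x2) - b*(y1 - y2))"
    by algebra
  then show ?thesis using h by simp
qed

lemma ode_rep:
  assumes f: "is_solution R f" and g: "is_solution R g"
    and gne: "\<And>t. t \<in> {0<..<pi} \<Longrightarrow> g t $ 1 - g t $ 2 \<noteq> 0"
    and s: "s \<in> {0<..<pi}" and r: "r \<in> {0<..<pi}"
  shows "f s $ 2 = f r $ 2 + (f r $ 1 - f r $ 2) / (g r $ 1 - g r $ 2) * (g s $ 2 - g r $ 2)"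
proof -
  note fd = f[unfolded sol_iff] and gd = g[unfolded sol_iff]
  define b where "b = (f r $ 1 - f r $ 2) / (g r $ 1 - g r $ 2)"
  have dq: "((\<lambda>t. (f t $ 1 - f t $ 2) / (g t $ 1 - g t $ 2)) has_real_derivative 0) (at t)"
    if t: "t \<in> {0<..<pi}" for t
  proof -
    have F: "((\<lambda>t. f t$1) has_real_derivative (1/sin t) * (-3*cos t) * f t$1 + (1/sin t)*(3*cos t)*f t$2) (at t)"
        "((\<lambda>t. f t$2) has_real_derivative (1/sin t) * (cos R - cos t) * f t$1 + (1/sin t)*(cos t - cos R)*f t$2) (at t)"
      using fd t by blast+
    have G: "((\<lambda>t. g t$1) has_real_derivative (1/sin t) * (-3*cos t) * g t$1 + (1/sin t)*(3*cos t)*g t$2) (at t)"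
        "((\<lambda>t. g t$2) has_real_derivative (1/sin t) * (cos R - cos t) * g t$1 + (1/sin t)*(cos t - cos R)*g t$2) (at t)"
      using gd t by blast+
    show ?thesis
      by (rule DERIV_cong[OF DERIV_divide[OF DERIV_diff[OF F] DERIV_diff[OF G] gne[OF t]]]) (simp only: ring1 div_0)
  qed
  have qc: "(f t $ 1 - f t $ 2) = b * (g t $ 1 - g t $ 2)" if t: "t \<in> {0<..<pi}" for t
  proof -
    have "(f t $ 1 - f t $ 2) / (g t $ 1 - g t $ 2) = (f r $ 1 - f r $ 2) / (g r $ 1 - g r $ 2)"
      by (rule DERIV_isconst3[of 0 pi]) (use t r dq in auto)
    then show ?thesis using gne[OF t] unfolding b_def by (simp add: field_simps)
  qed
  have dh: "((\<lambda>t. f t $ 2 - b * g t $ 2) has_real_derivative 0) (at t)"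
    if t: "t \<in> {0<..<pi}" for t
  proof -
    have a1: "((\<lambda>t. f t$2) has_real_derivative (1/sin t) * (cos R - cos t) * f t$1 + (1/sin t)*(cos t - cos R)*f t$2) (at t)"
      using fd t by blast
    have a2: "((\<lambda>t. g t$2) has_real_derivative (1/sin t) * (cos R - cos t) * g t$1 + (1/sin t)*(cos t - cos R)*g t$2) (at t)"
      using gd t by blast
    show ?thesis
      by (rule DERIV_cong[OF DERIV_diff[OF a1 DERIV_cmult[OF a2, of b]]]) (rule ring2[OF qc[OF t]])
  qed
  have "f s $ 2 - b * g s $ 2 = f r $ 2 - b * g r $ 2"
    by (rule DERIV_isconst3[of 0 pi]) (use s r dh in auto)
  then show ?thesis unfolding b_def[symmetric] by (simp add: algebra_simps)
qed

lemma alg_q: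
  fixes \<rho> k \<sigma> q PR Ps v :: real
  assumes "\<rho> \<noteq> 0" "\<sigma> \<noteq> 0" "PR \<noteq> 0" "q \<noteq> 0" "q = 3 + \<rho>^2"
  shows "(2*k/\<rho>^4 + 3 * k / (\<rho>^2 * q * PR) * (v * (1/\<sigma>)^2 * Ps - - PR / 3)) * \<sigma>^3
     = 3 * k * (1/\<rho>)^2 / q * ((1 + 2*(1/\<rho>)^2) * \<sigma>^3 + v * \<sigma> * (Ps/PR))"
  using assms(1-4)
  apply (simp add: field_simps power4_eq_xxxx power2_eq_square power3_eq_cube)
  apply (simp add: assms(5) algebra_simps power2_eq_square)
  done

lemma final_alg:
  fixes \<rho> k \<sigma> c PR Ps a1 a2 :: real
  assumes "\<rho> \<noteq> 0" "\<sigma> \<noteq> 0" "PR \<noteq> 0" "\<rho>^4 * a1 = k * 3" "\<rho>^4 * a2 = k * 2"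
  shows "(a2 + (a1 - a2) / ((1 - k*k + k^2) * (1/\<rho>)^2 * PR - (k^2 - k*k - \<rho>^2/3) * (1/\<rho>)^2 * PR)
            * ((c^2 - k*c - \<rho>^2/3) * (1/\<sigma>)^2 * Ps - (k^2 - k*k - \<rho>^2/3) * (1/\<rho>)^2 * PR)) * \<sigma>^3
   = 3 * k * (1/\<rho>)^2 / (3 + \<rho>^2) * ((1 + 2*(1/\<rho>)^2) * \<sigma>^3 + (c^2 - k*c - \<rho>^2/3) * \<sigma> * (Ps/PR))"
proof -
  define v where "v = c^2 - k*c - \<rho>^2/3"
  have r4: "\<rho>^4 \<noteq> 0" using assms(1) by simp
  have e1: "a1 = 3*k/\<rho>^4" "a2 = 2*k/\<rho>^4" using assms r4 by (simp_all add: field_simps)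
  have p: "3 + \<rho>^2 \<noteq> 0" by (smt (verit) zero_le_power2)
  have d: "(1 - k*k + k^2) * (1/\<rho>)^2 * PR - (k^2 - k*k - \<rho>^2/3) * (1/\<rho>)^2 * PR = (3 + \<rho>^2) * PR / (3 * \<rho>^2)"
    using assms(1) by (simp add: field_simps power2_eq_square)
  have g: "(k^2 - k*k - \<rho>^2/3) * (1/\<rho>)^2 * PR = - PR / 3"
    using assms(1) by (simp add: field_simps power2_eq_square)
  have hb: "(a1 - a2) / ((3 + \<rho>^2) * PR / (3 * \<rho>^2)) = 3 * k / (\<rho>^2 * (3 + \<rho>^2) * PR)"
    unfolding e1 using assms(1,3) p r4 by (simp add: field_simps power4_eq_xxxx power2_eq_square)
  have main: "(2*k/\<rho>^4 + 3 * k / (\<rho>^2 * (3 + \<rho>^2) * PR) * (v * (1/\<sigma>)^2 * Ps - - PR / 3)) * \<sigma>^3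
     = 3 * k * (1/\<rho>)^2 / (3 + \<rho>^2) * ((1 + 2*(1/\<rho>)^2) * \<sigma>^3 + v * \<sigma> * (Ps/PR))"
    by (rule alg_q[OF assms(1,2,3) p refl])
  show ?thesis unfolding d unfolding hb unfolding g v_def[symmetric] e1(2) by (rule main)
qed

theorem propositionA1:
  fixes R :: real
  assumes "0 < R" and "R < pi / 2"
  shows "fundamental_matrix R (phi R) \<and>
    (\<forall>f. is_solution R f \<and> (sin R) ^ 4 *\<^sub>R f R = cos R *\<^sub>R vector [3, 2] \<longrightarrow>
      (\<forall>s\<in>{0<..<pi}.
         f s $ 2 * (sin s) ^ 3 =
         (3 * cos R * (csc R)\<^sup>2 / (3 + (sin R)\<^sup>2)) *
         ((1 + 2 * (csc R)\<^sup>2) * (sin s) ^ 3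
          + ((cos s)\<^sup>2 - cos R * cos s - (sin R)\<^sup>2 / 3) * sin s
            * (cot (s / 2) / cot (R / 2)) powr (cos R))))"
proof (intro conjI allI impI ballI)
  have R: "R \<in> {0<..<pi}" using assms by auto
  show "fundamental_matrix R (phi R)" by (rule fund)
  fix f s
  assume H: "is_solution R f \<and> (sin R) ^ 4 *\<^sub>R f R = cos R *\<^sub>R vector [3, 2]"
    and s: "s \<in> {0<..<pi}"
  have cR: "\<And>t i. column 2 (phi R t) $ i = phi R t $ i $ 2" by (simp add: column_def)
  have gne: "\<And>t. t \<in> {0<..<pi} \<Longrightarrow> column 2 (phi R t) $ 1 - column 2 (phi R t) $ 2 \<noteq> 0"
    unfolding cR by (rule G_diff_ne)
  have rep0: "f s $ 2 = f R $ 2 + (f R $ 1 - f R $ 2) / (column 2 (phi R R) $ 1 - column 2 (phi R R) $ 2)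
      * (column 2 (phi R s) $ 2 - column 2 (phi R R) $ 2)"
    by (rule ode_rep[OF conjunct1[OF H] col2_sol gne s R])
  note rep = rep0[unfolded cR phi12 phi22 csc_def]
  have i1: "(sin R)^4 * f R $ 1 = cos R * 3"
    using arg_cong[OF conjunct2[OF H], of "\<lambda>v. v $ 1"] by simp
  have i2: "(sin R)^4 * f R $ 2 = cos R * 2"
    using arg_cong[OF conjunct2[OF H], of "\<lambda>v. v $ 2"] by simp
  have rn: "sin R \<noteq> 0" using R sin_gt_zero by force
  have sn: "sin s \<noteq> 0" using s sin_gt_zero by force
  have pn: "cot (R/2) powr cos R \<noteq> 0" using P_pos[OF R, of "cos R"] by simp
  show "f s $ 2 * (sin s) ^ 3 =
         (3 * cos R * (csc R)\<^sup>2 / (3 + (sin R)\<^sup>2)) *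
         ((1 + 2 * (csc R)\<^sup>2) * (sin s) ^ 3
          + ((cos s)\<^sup>2 - cos R * cos s - (sin R)\<^sup>2 / 3) * sin s
            * (cot (s / 2) / cot (R / 2)) powr (cos R))"
    unfolding rep csc_def powr_divide
    by (rule final_alg[OF rn sn pn i1 i2])
qed

end
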